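(* Let $G$ be a scheduling game on $m\ge2$ identical machines of common speed $s>0$ with arbitrary priority lists, in which every job $i$ has negative deterioration $p_i(t)=\max\{\tau_i,b_i-a_it\}$ with $0\le a_i\le s$ (all jobs delay-averse). Then every pure Nash equilibrium $\sigma$ of $G$ satisfies $C_{\max}(\sigma)\le\left(3-\frac1m\right)OPT(G)$; i.e., $PoA({\cal G}^{-DA}_P)\le 3-\frac1m$.
   Context: Scheduling game: a finite set $N$ of $n$ jobs (players) and a set $M$ of $m$ machines. Machine $j$ has speed $s_j>0$ and a priority list $\pi_j$, a bijection $N\to\{1,\dots,n\}$; job $u$ has higher priority than $v$ on $j$ iff $\pi_j(u)<\pi_j(v)$. Negative deterioration: $p_i(t)=\max\{\tau_i,b_i-a_it\}$ with $b_i,a_i\ge0$, $\tau_i>0$. A profile $\sigma\in M^N$ assigns each job to a machine. On machine $j$, the jobs assigned to it, listed in increasing $\pi_j$-order as $i_1,i_2,\dots$, are processed without idle time: $S_{i_1}(\sigma)=0$, $C_{i_k}(\sigma)=S_{i_k}(\sigma)+p_{i_k}(S_{i_k}(\sigma))/s_j$, $S_{i_{k+1}}(\sigma)=C_{i_k}(\sigma)$. The cost of job $i$ is $C_i(\sigma)$. A pure Nash equilibrium (NE) is a profile in which no job can strictly decrease its completion time by unilaterally changing its machine. Makespan $C_{\max}(\sigma)=\max_iC_i(\sigma)$; $OPT(G)=\min_\sigma C_{\max}(\sigma)$ over all profiles. ${\cal G}^{-DA}_P$ denotes the class of all games described in the claim, and its PoA is the supremum over its games of $\max_{\sigma\text{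 NE}}C_{\max}(\sigma)/OPT(G)$. *)

theory Defs
  imports Complex_Main "HOL-Library.FuncSet"
begin

text \<open>Scheduling game data: jobs N :: 'j set, machines M :: 'm set,
 speeds s :: 'm => real, priority lists pi :: 'm => 'j => nat
 (pi j a bijection N -> {1..n}), processing-time functions p :: 'j => real => real.\<close>

definition neg_det :: "real \<Rightarrow> real \<Rightarrow> real \<Rightarrow> real \<Rightarrow> real" where
  "neg_det \<tau> b a t = max \<tau> (b - a * t)"

definition prio_list :: "'j set \<Rightarrow> ('m \<Rightarrow> 'j \<Rightarrow> nat) \<Rightarrow> 'm \<Rightarrow> 'j list" where
  "prio_list N \<pi> j = map (the_inv_into N (\<pi> j)) [1..<card N + 1]"

definition machine_seq :: "'j set \<Rightarrow> ('m \<Rightarrow> 'j \<Rightarrow> nat) \<Rightarrow> ('j \<Rightarrow> 'm) \<Rightarrow> 'm \<Rightarrow> 'j list" where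
  "machine_seq N \<pi> \<sigma> j = filter (\<lambda>i. \<sigma> i = j) (prio_list N \<pi> j)"

fun run :: "('j \<Rightarrow> real \<Rightarrow> real) \<Rightarrow> real \<Rightarrow> real \<Rightarrow> 'j list \<Rightarrow> real" where
  "run p v t [] = t"
| "run p v t (i # is) = run p v (t + p i t / v) is"

definition completion ::
  "'j set \<Rightarrow> ('m \<Rightarrow> real) \<Rightarrow> ('m \<Rightarrow> 'j \<Rightarrow> nat) \<Rightarrow> ('j \<Rightarrow> real \<Rightarrow> real) \<Rightarrow> ('j \<Rightarrow> 'm) \<Rightarrow> 'j \<Rightarrow> real" where
  "completion N s \<pi> p \<sigma> i =
     run p (s (\<sigma> i)) 0 (takeWhile (\<lambda>k. k \<noteq> i) (machine_seq N \<pi> \<sigma> (\<sigma> i)) @ [i])"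

definition profiles :: "'j set \<Rightarrow> 'm set \<Rightarrow> ('j \<Rightarrow> 'm) set" where
  "profiles N M = N \<rightarrow>\<^sub>E M"

definition makespan ::
  "'j set \<Rightarrow> ('m \<Rightarrow> real) \<Rightarrow> ('m \<Rightarrow> 'j \<Rightarrow> nat) \<Rightarrow> ('j \<Rightarrow> real \<Rightarrow> real) \<Rightarrow> ('j \<Rightarrow> 'm) \<Rightarrow> real" where
  "makespan N s \<pi> p \<sigma> = Max (insert 0 (completion N s \<pi> p \<sigma> ` N))"

definition OPT ::
  "'j set \<Rightarrow> 'm set \<Rightarrow> ('m \<Rightarrow> real) \<Rightarrow> ('m \<Rightarrow> 'j \<Rightarrow> nat) \<Rightarrow> ('j \<Rightarrow> real \<Rightarrow> real) \<Rightarrow> real" where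
  "OPT N M s \<pi> p = Min (makespan N s \<pi> p ` profiles N M)"

definition is_NE ::
  "'j set \<Rightarrow> 'm set \<Rightarrow> ('m \<Rightarrow> real) \<Rightarrow> ('m \<Rightarrow> 'j \<Rightarrow> nat) \<Rightarrow> ('j \<Rightarrow> real \<Rightarrow> real) \<Rightarrow> ('j \<Rightarrow> 'm) \<Rightarrow> bool" where
  "is_NE N M s \<pi> p \<sigma> \<longleftrightarrow> \<sigma> \<in> profiles N M \<and>
     (\<forall>i\<in>N. \<forall>j\<in>M. completion N s \<pi> p \<sigma> i \<le> completion N s \<pi> p (\<sigma>(i := j)) i)"

end

theory Submission
  imports Defs
begin

lemma run_append: "run p v t (xs @ ys) = run p v (run p v t xs) ys"
  by (induction xs arbitrary: t) auto

lemma run_ge: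
  assumes "\<forall>i\<in>set xs. \<forall>t. p i t \<ge> 0" and "v > 0"
  shows "t \<le> run p v t xs"
  using assms(1)
proof (induction xs arbitrary: t)
  case Nil then show ?case by simp
next
  case (Cons i xs)
  have "t \<le> t + p i t / v" using Cons.prems assms(2) by auto
  also have "\<dots> \<le> run p v (t + p i t / v) xs" using Cons by auto
  finally show ?case by simp
qed

lemma lemA:
  assumes "v > 0"
    and P0: "\<forall>i\<in>set xs. \<forall>t. p i t \<ge> 0"
    and anti: "\<forall>i\<in>set xs. \<forall>t1 t2. t1 \<le> t2 \<longrightarrow> p i t2 \<le> p i t1"
    and mono: "\<forall>i\<in>set xs. \<forall>t1 t2. t1 \<le> t2 \<longrightarrow> t1 + p i t1 / v \<le> t2 + p i t2 / v"
  shows "run p v t xs \<le> max t Q + sum_list (map (\<lambda>i. p i Q / v) xs)"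
  using P0 anti mono
proof (induction xs arbitrary: t)
  case Nil then show ?case by simp
next
  case (Cons i xs)
  have key: "max (t + p i t / v) Q \<le> max t Q + p i Q / v"
  proof (cases "t \<le> Q")
    case True
    have "t + p i t / v \<le> Q + p i Q / v" using Cons.prems(3) True by auto
    moreover have "0 \<le> p i Q / v" using Cons.prems(1) assms(1) by auto
    ultimately show ?thesis using True by auto
  next
    case False
    have "p i t \<le> p i Q" using Cons.prems(2) False by auto
    then have "p i t / v \<le> p i Q / v" using assms(1) by (simp add: divide_right_mono)
    moreover have "0 \<le> p i Q / v" using Cons.prems(1) assms(1) by auto
    ultimately show ?thesis using False by auto
  qed
  have "run p v t (i # xs) = run p v (t + p i t / v) xs" by simp
  also have "\<dots> \<le> max (t + p i t / v) Q + sum_list (map (\<lambda>i. p i Q / v) xs)"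
    using Cons by auto
  also have "\<dots> \<le> max t Q + sum_list (map (\<lambda>i. p i Q / v) (i # xs))"
    using key by simp
  finally show ?case by simp
qed

lemma lemB:
  assumes "v > 0"
    and P0: "\<forall>i\<in>set xs. \<forall>t. p i t \<ge> 0"
    and anti: "\<forall>i\<in>set xs. \<forall>t1 t2. t1 \<le> t2 \<longrightarrow> p i t2 \<le> p i t1"
    and "run p v t xs \<le> Q"
  shows "t + sum_list (map (\<lambda>i. p i Q / v) xs) \<le> run p v t xs"
  using P0 anti assms(4)
proof (induction xs arbitrary: t)
  case Nil then show ?case by simp
next
  case (Cons i xs)
  let ?t' = "t + p i t / v"
  have r: "run p v t (i # xs) = run p v ?t' xs" by simp
  have "?t' \<le> run p v ?t' xs" using run_ge[of xs p v ?t'] Cons.prems(1) assms(1) by auto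
  moreover have "t \<le> ?t'" using Cons.prems(1) assms(1) by auto
  ultimately have "t \<le> Q" using Cons.prems(3) r by linarith
  then have "p i Q \<le> p i t" using Cons.prems(2) by auto
  then have "p i Q / v \<le> p i t / v" using assms(1) by (simp add: divide_right_mono)
  moreover have "?t' + sum_list (map (\<lambda>i. p i Q / v) xs) \<le> run p v ?t' xs"
    using Cons r by auto
  ultimately show ?case using r by simp
qed

lemma takeWhile_last: "distinct (ys @ [i]) \<Longrightarrow> takeWhile (\<lambda>x. x \<noteq> i) (ys @ [i]) = ys"
  by (subst takeWhile_append2) auto

theorem theorem12:
  fixes N :: "'j set" and M :: "'m set" and s :: real
    and \<pi> :: "'m \<Rightarrow> 'j \<Rightarrow> nat" and \<tau> b a :: "'j \<Rightarrow> real" and \<sigma> :: "'j \<Rightarrow> 'm"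
  assumes "finite N" and "finite M" and "card M \<ge> 2"
    and "s > 0"
    and "\<And>j. j \<in> M \<Longrightarrow> bij_betw (\<pi> j) N {1..card N}"
    and "\<And>i. i \<in> N \<Longrightarrow> \<tau> i > 0 \<and> b i \<ge> 0 \<and> 0 \<le> a i \<and> a i \<le> s"
    and "is_NE N M (\<lambda>_. s) \<pi> (\<lambda>i. neg_det (\<tau> i) (b i) (a i)) \<sigma>"
  shows "makespan N (\<lambda>_. s) \<pi> (\<lambda>i. neg_det (\<tau> i) (b i) (a i)) \<sigma>
         \<le> (3 - 1 / real (card M)) * OPT N M (\<lambda>_. s) \<pi> (\<lambda>i. neg_det (\<tau> i) (b i) (a i))"
proof -
  define P where "P = (\<lambda>i. neg_det (\<tau> i) (b i) (a i))"
  define S where "S = (\<lambda>_::'m. s)"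
  define Q where "Q = OPT N M S \<pi> P"
  define m where "m = card M"
  have spos: "s > 0" by fact
  have mpos: "real m \<ge> 2" using assms(3) m_def by simp
  have Mne: "M \<noteq> {}" using assms(3) by auto
  have P0: "\<And>i t. i \<in> N \<Longrightarrow> P i t \<ge> 0"
    using assms(6) by (force simp: P_def neg_det_def)
  have anti: "\<And>i t1 t2. i \<in> N \<Longrightarrow> t1 \<le> t2 \<Longrightarrow> P i t2 \<le> P i t1"
  proof -
    fix i t1 t2 assume i: "i \<in> N" and t: "(t1::real) \<le> t2"
    have "a i * t1 \<le> a i * t2" using assms(6)[OF i] t by (simp add: mult_left_mono)
    then show "P i t2 \<le> P i t1" by (auto simp: P_def neg_det_def)
  qed
  have mono: "\<And>i t1 t2. i \<in> N \<Longrightarrow> t1 \<le> t2 \<Longrightarrow> t1 + P i t1 / s \<le> t2 + P i t2 / s"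
  proof -
    fix i t1 t2 assume i: "i \<in> N" and t: "(t1::real) \<le> t2"
    have h: "(s - a i) * t1 \<le> (s - a i) * t2" using assms(6)[OF i] t by (simp add: mult_left_mono)
    have "s * t1 + P i t1 \<le> s * t2 + P i t2"
    proof -
      have st: "s * t1 \<le> s * t2" using t spos by simp
      have h2: "s * t1 - a i * t1 \<le> s * t2 - a i * t2" using h by (simp add: algebra_simps)
      show ?thesis unfolding P_def neg_det_def max_def
        using h2 st by (split if_split)+ linarith
    qed
    then have "(s * t1 + P i t1) / s \<le> (s * t2 + P i t2) / s"
      using spos by (simp add: divide_right_mono)
    then show "t1 + P i t1 / s \<le> t2 + P i t2 / s" using spos by (simp add: field_simps)
  qed
  have prio_set: "\<And>j. j \<in> M \<Longrightarrow> set (prio_list N \<pi> j) = N"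
  proof -
    fix j assume j: "j \<in> M"
    have "bij_betw (the_inv_into N (\<pi> j)) {1..card N} N"
      using bij_betw_the_inv_into[OF assms(5)[OF j]] .
    then have "the_inv_into N (\<pi> j) ` {1..card N} = N" by (simp add: bij_betw_def)
    moreover have "{1..<card N + 1} = {1..card N}" by auto
    ultimately show "set (prio_list N \<pi> j) = N" unfolding prio_list_def set_map set_upt by simp
  qed
  have prio_dist: "\<And>j. j \<in> M \<Longrightarrow> distinct (prio_list N \<pi> j)"
  proof -
    fix j assume j: "j \<in> M"
    have "bij_betw (the_inv_into N (\<pi> j)) {1..card N} N"
      using bij_betw_the_inv_into[OF assms(5)[OF j]] .
    then have "inj_on (the_inv_into N (\<pi> j)) {1..<card N + 1}"
      by (simp add: bij_betw_def atLeastLessThanSuc_atLeastAtMost)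
    then show "distinct (prio_list N \<pi> j)" unfolding prio_list_def distinct_map set_upt by simp
  qed
  have ms_set: "\<And>j \<sigma>'. j \<in> M \<Longrightarrow> set (machine_seq N \<pi> \<sigma>' j) = {i \<in> N. \<sigma>' i = j}"
    using prio_set by (auto simp: machine_seq_def)
  have ms_dist: "\<And>j \<sigma>'. j \<in> M \<Longrightarrow> distinct (machine_seq N \<pi> \<sigma>' j)"
    using prio_dist by (auto simp: machine_seq_def)
  have finP: "finite (profiles N M)"
    using assms(1,2) by (simp add: profiles_def finite_PiE)
  have neP: "profiles N M \<noteq> {}"
    using Mne by (simp add: profiles_def PiE_eq_empty_iff)
  obtain \<sigma>s where \<sigma>s: "\<sigma>s \<in> profiles N M" and Qeq: "makespan N S \<pi> P \<sigma>s = Q"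
  proof -
    have "Min (makespan N S \<pi> P ` profiles N M) \<in> makespan N S \<pi> P ` profiles N M"
      using finP neP by (intro Min_in) auto
    then show ?thesis using that unfolding Q_def OPT_def by auto
  qed
  have compl_le_ms: "\<And>\<sigma>' i. i \<in> N \<Longrightarrow> completion N S \<pi> P \<sigma>' i \<le> makespan N S \<pi> P \<sigma>'"
    unfolding makespan_def using assms(1) by (intro Max_ge) auto
  have ms_ge0: "\<And>\<sigma>'. 0 \<le> makespan N S \<pi> P \<sigma>'"
    unfolding makespan_def using assms(1) by (intro Max_ge) auto
  have Q0: "Q \<ge> 0" using ms_ge0 Qeq by metis
  have \<sigma>sM: "\<And>i. i \<in> N \<Longrightarrow> \<sigma>s i \<in> M" using \<sigma>s by (auto simp: profiles_def)
  define g where "g = (\<lambda>i. P i Q / s)"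
  have g0: "\<And>i. i \<in> N \<Longrightarrow> g i \<ge> 0" using P0 spos by (simp add: g_def)
  have Lopt: "\<And>j. j \<in> M \<Longrightarrow> run P s 0 (machine_seq N \<pi> \<sigma>s j) \<le> Q"
  proof -
    fix j assume j: "j \<in> M"
    show "run P s 0 (machine_seq N \<pi> \<sigma>s j) \<le> Q"
    proof (cases "machine_seq N \<pi> \<sigma>s j = []")
      case True then show ?thesis using Q0 by simp
    next
      case False
      then obtain ys i where eq: "machine_seq N \<pi> \<sigma>s j = ys @ [i]"
        by (metis append_butlast_last_id)
      have iN: "i \<in> N" and ij: "\<sigma>s i = j" using ms_set[OF j, of \<sigma>s] eq by auto
      have "completion N S \<pi> P \<sigma>s i = run P s 0 (ys @ [i])"
        unfolding completion_def using ij eq takeWhile_last[of ys i] ms_dist[OF j, of \<sigma>s]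
        by (simp add: S_def)
      then show ?thesis using compl_le_ms[OF iN, of \<sigma>s] Qeq eq by simp
    qed
  qed
  have sumN: "sum g N \<le> real m * Q"
  proof -
    have "sum g N = (\<Sum>j\<in>M. sum g {i \<in> N. \<sigma>s i = j})"
      using sum.group[OF assms(1) assms(2), of \<sigma>s g] \<sigma>sM by (simp add: image_subsetI)
    also have "\<dots> \<le> (\<Sum>j\<in>M. Q)"
    proof (rule sum_mono)
      fix j assume j: "j \<in> M"
      have "sum g {i \<in> N. \<sigma>s i = j} = sum_list (map g (machine_seq N \<pi> \<sigma>s j))"
        using sum_list_distinct_conv_sum_set[OF ms_dist[OF j, of \<sigma>s], of g] ms_set[OF j] by simp
      also have "\<dots> \<le> run P s 0 (machine_seq N \<pi> \<sigma>s j)"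
        using lemB[OF spos, of "machine_seq N \<pi> \<sigma>s j" P 0 Q] ms_set[OF j, of \<sigma>s] P0 anti Lopt[OF j]
        unfolding g_def by auto
      also have "\<dots> \<le> Q" using Lopt[OF j] .
      finally show "sum g {i \<in> N. \<sigma>s i = j} \<le> Q" .
    qed
    finally show ?thesis by (simp add: m_def)
  qed
  have \<sigma>M: "\<And>i. i \<in> N \<Longrightarrow> \<sigma> i \<in> M" using assms(7) by (auto simp: is_NE_def profiles_def)
  have NE: "\<And>i j. i \<in> N \<Longrightarrow> j \<in> M \<Longrightarrow> completion N S \<pi> P \<sigma> i \<le> completion N S \<pi> P (\<sigma>(i := j)) i"
    using assms(7) by (auto simp: is_NE_def S_def P_def)
  have bound: "completion N S \<pi> P \<sigma> k \<le> (3 - 1 / real m) * Q" if kN: "k \<in> N" for k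
  proof -
    define H where "H = (\<lambda>j. takeWhile (\<lambda>x. x \<noteq> k) (machine_seq N \<pi> (\<sigma>(k := j)) j))"
    define T where "T = (\<lambda>j. run P s 0 (H j))"
    define f where "f = (\<lambda>t. t + P k t / s)"
    have Hset: "\<And>j. j \<in> M \<Longrightarrow> set (H j) \<subseteq> {i \<in> N - {k}. \<sigma> i = j}"
    proof
      fix j x assume j: "j \<in> M" and x: "x \<in> set (H j)"
      have "x \<noteq> k" using x unfolding H_def by (metis (mono_tags) set_takeWhileD)
      moreover have "x \<in> set (machine_seq N \<pi> (\<sigma>(k := j)) j)"
        using x unfolding H_def by (meson set_takeWhileD)
      ultimately show "x \<in> {i \<in> N - {k}. \<sigma> i = j}" using ms_set[OF j] by auto
    qed
    have Hdist: "\<And>j. j \<in> M \<Longrightarrow> distinct (H j)"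
      unfolding H_def using ms_dist by (metis distinct_take takeWhile_eq_take)
    have compl: "\<And>j. j \<in> M \<Longrightarrow> completion N S \<pi> P (\<sigma>(k := j)) k = f (T j)"
      unfolding completion_def H_def T_def f_def S_def by (simp add: run_append)
    have Tle: "\<And>j. j \<in> M \<Longrightarrow> T j \<le> Q + sum g {i \<in> N - {k}. \<sigma> i = j}"
    proof -
      fix j assume j: "j \<in> M"
      have "T j \<le> max 0 Q + sum_list (map g (H j))"
        unfolding T_def g_def using lemA[OF spos, of "H j" P 0 Q] Hset[OF j] P0 anti mono by blast
      also have "\<dots> = Q + sum g (set (H j))"
        using Q0 sum_list_distinct_conv_sum_set[OF Hdist[OF j]] by simp
      also have "\<dots> \<le> Q + sum g {i \<in> N - {k}. \<sigma> i = j}"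
        using sum_mono2[of "{i \<in> N - {k}. \<sigma> i = j}" "set (H j)" g] Hset[OF j] g0 assms(1) by auto
      finally show "T j \<le> Q + sum g {i \<in> N - {k}. \<sigma> i = j}" .
    qed
    have sumT: "(\<Sum>j\<in>M. T j) \<le> real m * Q + sum g (N - {k})"
    proof -
      have "(\<Sum>j\<in>M. T j) \<le> (\<Sum>j\<in>M. Q + sum g {i \<in> N - {k}. \<sigma> i = j})"
        using Tle by (rule sum_mono)
      also have "\<dots> = real m * Q + (\<Sum>j\<in>M. sum g {i \<in> N - {k}. \<sigma> i = j})"
        by (simp add: sum.distrib m_def)
      also have "(\<Sum>j\<in>M. sum g {i \<in> N - {k}. \<sigma> i = j}) = sum g (N - {k})"
      proof -
        have "\<sigma> ` (N - {k}) \<subseteq> M" using \<sigma>M by auto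
        then show ?thesis using sum.group[of "N - {k}" M \<sigma> g] assms(1,2) by simp
      qed
      finally show ?thesis by simp
    qed
    have "sum g N = g k + sum g (N - {k})"
      using kN assms(1) by (simp add: sum.remove)
    then have sumT2: "(\<Sum>j\<in>M. T j) \<le> 2 * real m * Q - g k" using sumT sumN by simp
    define X where "X = 2 * Q - g k / real m"
    have "\<exists>j\<in>M. T j \<le> X"
    proof (rule ccontr)
      assume "\<not> (\<exists>j\<in>M. T j \<le> X)"
      then have "\<forall>j\<in>M. X < T j" by (simp add: not_le)
      then have "(\<Sum>j\<in>M. X) < (\<Sum>j\<in>M. T j)"
        using sum_strict_mono[OF assms(2) Mne, of "\<lambda>_. X" T] by simp
      moreover have "(\<Sum>j\<in>M. X) = 2 * real m * Q - g k"
        using mpos by (simp add: X_def m_def field_simps)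
      ultimately show False using sumT2 by simp
    qed
    then obtain j where jM: "j \<in> M" and TX: "T j \<le> X" by blast
    have CkT: "completion N S \<pi> P \<sigma> k \<le> f (T j)"
      using NE[OF kN jM] compl[OF jM] by simp
    have gkO: "g k \<le> Q"
    proof -
      have "completion N S \<pi> P \<sigma>s k = f (run P s 0 (takeWhile (\<lambda>x. x \<noteq> k) (machine_seq N \<pi> \<sigma>s (\<sigma>s k))))"
        unfolding completion_def f_def S_def by (simp add: run_append)
      moreover have "0 \<le> run P s 0 (takeWhile (\<lambda>x. x \<noteq> k) (machine_seq N \<pi> \<sigma>s (\<sigma>s k)))"
        apply (rule run_ge)
        using P0 ms_set[OF \<sigma>sM[OF kN]] spos by (auto dest: set_takeWhileD)
      ultimately have "f 0 \<le> completion N S \<pi> P \<sigma>s k"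
        using mono[OF kN] unfolding f_def by (metis add_0)
      then have "f 0 \<le> Q" using compl_le_ms[OF kN, of \<sigma>s] Qeq by simp
      moreover have "P k Q \<le> P k 0" using anti[OF kN Q0] .
      moreover have "P k Q / s \<le> P k 0 / s" using \<open>P k Q \<le> P k 0\<close> spos by (simp add: divide_right_mono)
      ultimately show ?thesis unfolding g_def f_def by simp
    qed
    have gk0: "g k \<ge> 0" using g0[OF kN] .
    have fin: "f (T j) \<le> (3 - 1 / real m) * Q"
    proof (cases "T j \<le> Q")
      case True
      have "f (T j) \<le> f Q" using mono[OF kN True] unfolding f_def .
      also have "\<dots> = Q + g k" by (simp add: f_def g_def)
      also have "\<dots> \<le> 2 * Q" using gkO by simp
      also have "\<dots> \<le> (3 - 1 / real m) * Q"
      proof -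
        have "1 / real m \<le> 1" using mpos by simp
        then have "Q * (1 / real m) \<le> Q * 1" using Q0 by (rule mult_left_mono)
        then show ?thesis by (simp add: algebra_simps)
      qed
      finally show ?thesis .
    next
      case False
      have "P k (T j) \<le> P k Q" using anti[OF kN] False by simp
      then have "f (T j) \<le> T j + g k" unfolding f_def g_def using spos by (simp add: divide_right_mono)
      also have "\<dots> \<le> 2 * Q + g k * (1 - 1 / real m)" using TX by (simp add: X_def algebra_simps)
      also have "\<dots> \<le> 2 * Q + Q * (1 - 1 / real m)"
      proof -
        have "0 \<le> 1 - 1 / real m" using mpos by simp
        then show ?thesis using gkO by (simp add: mult_right_mono)
      qed
      also have "\<dots> = (3 - 1 / real m) * Q" by (simp add: algebra_simps)
      finally show ?thesis .
    qed
    show ?thesis using CkT fin by simp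
  qed
  have B0: "0 \<le> (3 - 1 / real m) * Q"
  proof -
    have "1 / real m \<le> 1" using mpos by simp
    then have "0 \<le> 3 - 1 / real m" by linarith
    then show ?thesis using Q0 by simp
  qed
  have "makespan N S \<pi> P \<sigma> \<le> (3 - 1 / real m) * Q"
    unfolding makespan_def using assms(1) bound B0 by (auto intro!: Max.boundedI)
  then show ?thesis by (simp add: S_def P_def Q_def m_def)
qed

end
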